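(* Let $\mathbf{X}$ be a Banach space, $\mathcal{S}\subset\mathbf{X}$, and let $\mathbb{P}$ be a Borel probability measure on $\mathcal{S}$ of growth order $s_0\in[0,\infty)$. Then $s_0\ge s^\ast_{\mathbf{X}}(\mathcal{S})$.
   Context: Let $(\mathbf{X},\|\cdot\|_{\mathbf{X}})$ be a real Banach space and $\mathcal{S}\subset\mathbf{X}$. A codec is a sequence $((E_R,D_R))_{R\in\mathbb{N}}$ of maps $E_R:\mathcal{S}\to\{0,1\}^R$, $D_R:\{0,1\}^R\to\mathbf{X}$; the distortion is $\delta_{\mathcal{S},\mathbf{X}}(E_R,D_R)=\sup_{\mathbf{x}\in\mathcal{S}}\|\mathbf{x}-D_R(E_R(\mathbf{x}))\|_{\mathbf{X}}$, and $s^\ast_{\mathbf{X}}(\mathcal{S})=\sup\{s\ge0:\exists\text{ codec with }\sup_RR^s\delta_{\mathcal{S},\mathbf{X}}(E_R,D_R)<\infty\}\in[0,\infty]$. $\mathcal{S}$ carries the trace of the Borel $\sigma$-algebra of $\mathbf{X}$. $\mathbb{P}$ has (logarithmic) growth order $s_0$ w.r.t. $\mathbf{X}$ if for every $s>s_0$ there exist $\varepsilon_0,c>0$ with $\mathbb{P}(\mathcal{S}\cap\mathcal{B}(\mathbf{x},\varepsilon;\mathbf{X}))\le2^{-c\varepsilon^{-1/s}}$ for all $\mathbf{x}\in\mathbf{X}$, $\varepsilon\in(0,\varepsilon_0)$ ($\mathcal{B}$ = closed ball). *)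

theory Defs
  imports "HOL-Probability.Probability"
begin

definition is_codec :: "'a set \<Rightarrow> (nat \<Rightarrow> 'a \<Rightarrow> bool list) \<Rightarrow> bool" where
  "is_codec S E \<longleftrightarrow> (\<forall>R. \<forall>x\<in>S. length (E R x) = R)"

definition distortion ::
  "'a::real_normed_vector set \<Rightarrow> (nat \<Rightarrow> 'a \<Rightarrow> bool list) \<Rightarrow> (nat \<Rightarrow> bool list \<Rightarrow> 'a) \<Rightarrow> nat \<Rightarrow> ereal" where
  "distortion S E D R = (SUP x\<in>S. ereal (norm (x - D R (E R x))))"

text \<open>Optimal compression exponent s*_X(S) in [0,\<infinity>] (sup of the empty set read as 0).\<close>
definition optimal_exponent :: "'a::real_normed_vector set \<Rightarrow> ereal" where
  "optimal_exponent S = Sup (insert 0 {ereal s | s. s \<ge> 0 \<and>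
     (\<exists>E D. is_codec S E \<and>
        (\<exists>C::real. \<forall>R::nat. R \<ge> 1 \<longrightarrow> ereal (real R powr s) * distortion S E D R \<le> ereal C))})"

definition has_growth_order :: "'a::real_normed_vector set \<Rightarrow> 'a measure \<Rightarrow> real \<Rightarrow> bool" where
  "has_growth_order S P s0 \<longleftrightarrow> (\<forall>s>s0. \<exists>\<epsilon>0>0. \<exists>c>0. \<forall>x \<epsilon>. 0 < \<epsilon> \<and> \<epsilon> < \<epsilon>0 \<longrightarrow>
      measure P (S \<inter> cball x \<epsilon>) \<le> 2 powr (- c * \<epsilon> powr (-1 / s)))"

end

theory Submission
  imports Defs "HOL-Real_Asymp.Real_Asymp"
begin

lemma asym_aux:
  fixes c C s t e0 :: real
  assumes "c > 0" "C > 0" "t > 0" "s > t" "e0 > 0"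
  shows "eventually (\<lambda>R::nat. real R < c * (C / real R powr s) powr (-1/t) \<and> C / real R powr s < e0) sequentially"
  using assms
  apply (intro eventually_conj)
  subgoal by real_asymp
  subgoal by real_asymp
  done

theorem corollary2p5:
  fixes S :: "'a::banach set" and P :: "'a measure" and s0 :: real
  assumes "prob_space P"
    and "space P = S"
    and "sets P = sets (restrict_space borel S)"
    and "s0 \<ge> 0"
    and "has_growth_order S P s0"
  shows "ereal s0 \<ge> optimal_exponent S"
proof -
  interpret prob_space P by fact
  have SP: "measure P S = 1" using prob_space assms(2) by simp
  have Sne: "S \<noteq> {}" using SP by auto
  have meas: "S \<inter> cball y e \<in> sets P" for y :: 'a and e
  proof -
    have "S \<inter> cball y e \<in> (\<inter>) S ` sets borel" by (intro imageI borel_closed) auto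
    thus ?thesis using assms(3) by (simp add: sets_restrict_space)
  qed
  have main: "s \<le> s0" if cod: "is_codec S E"
      and bnd: "\<forall>R::nat. R \<ge> 1 \<longrightarrow> ereal (real R powr s) * distortion S E D R \<le> ereal C"
      for s C E D
  proof (rule ccontr)
    assume "\<not> s \<le> s0"
    hence ss: "s > s0" by simp
    define t where "t = (s0 + s) / 2"
    have t: "t > s0" "t < s" "t > 0" using ss assms(4) by (auto simp: t_def)
    obtain e0 c where e0: "e0 > 0" "c > 0" and gr: "\<And>x e. 0 < e \<Longrightarrow> e < e0 \<Longrightarrow>
        measure P (S \<inter> cball x e) \<le> 2 powr (- c * e powr (-1 / t))"
      using assms(5) t(1) unfolding has_growth_order_def by blast
    have nb: "norm (x - D R (E R x)) \<le> C / real R powr s" if "x \<in> S" "R \<ge> 1" for x R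
    proof -
      have "ereal (norm (x - D R (E R x))) \<le> distortion S E D R"
        unfolding distortion_def using that by (intro SUP_upper) auto
      hence "ereal (real R powr s) * ereal (norm (x - D R (E R x))) \<le> ereal (real R powr s) * distortion S E D R"
        by (intro ereal_mult_left_mono) auto
      also have "\<dots> \<le> ereal C" using bnd that by auto
      finally have "real R powr s * norm (x - D R (E R x)) \<le> C" by simp
      moreover have "real R powr s > 0" using that by simp
      ultimately show ?thesis by (simp add: field_simps)
    qed
    have C0: "C \<ge> 0"
    proof -
      obtain x where "x \<in> S" using Sne by auto
      from nb[OF this, of 1] show ?thesis by (metis norm_ge_zero order_trans powr_one_eq_one of_nat_1 div_by_1 order.refl)
    qed
    obtain R :: nat where R: "R \<ge> 1" "real R < c * ((C+1) / real R powr s) powr (-1/t)"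
        "(C+1) / real R powr s < e0"
    proof -
      have "eventually (\<lambda>R::nat. R \<ge> 1 \<and> (real R < c * ((C+1) / real R powr s) powr (-1/t) \<and> (C+1) / real R powr s < e0)) sequentially"
        using asym_aux[of c "C+1" t s e0] e0 t C0 eventually_ge_at_top[of 1] by (auto intro: eventually_conj)
      then obtain R::nat where "R \<ge> 1 \<and> (real R < c * ((C+1) / real R powr s) powr (-1/t) \<and> (C+1) / real R powr s < e0)"
        using eventually_sequentially by auto
      thus ?thesis using that by blast
    qed
    define e where "e = (C+1) / real R powr s"
    have epos: "e > 0" using C0 R(1) by (simp add: e_def)
    define W where "W = {w :: bool list. length w = R}"
    have finW: "finite W" unfolding W_def using finite_lists_length_eq[of "UNIV::bool set" R] by simp
    have cardW: "card W = 2 ^ R" unfolding W_def using card_lists_length_eq[of "UNIV::bool set" R] by simp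
    have cov: "S \<subseteq> (\<Union>w\<in>W. S \<inter> cball (D R w) e)"
    proof
      fix x assume x: "x \<in> S"
      have "E R x \<in> W" using cod x unfolding is_codec_def W_def by auto
      moreover have "dist (D R (E R x)) x \<le> e"
        proof -
        have "C / real R powr s \<le> (C+1) / real R powr s" by (intro divide_right_mono) auto
        thus ?thesis using nb[OF x R(1)] by (simp add: e_def dist_norm norm_minus_commute)
      qed
      ultimately show "x \<in> (\<Union>w\<in>W. S \<inter> cball (D R w) e)" using x by auto
    qed
    have "1 = measure P S" using SP by simp
    also have "\<dots> \<le> measure P (\<Union>w\<in>W. S \<inter> cball (D R w) e)"
      using cov finW meas by (intro finite_measure_mono sets.finite_UN) auto
    also have "\<dots> \<le> (\<Sum>w\<in>W. measure P (S \<inter> cball (D R w) e))"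
      using finW meas by (intro finite_measure_subadditive_finite) auto
    also have "\<dots> \<le> (\<Sum>w\<in>W. 2 powr (- c * e powr (-1 / t)))"
      using gr epos R(3) by (intro sum_mono) (auto simp: e_def)
    also have "\<dots> = 2 powr real R * 2 powr (- c * e powr (-1 / t))"
      using cardW by (simp add: powr_realpow)
    also have "\<dots> = 2 powr (real R - c * e powr (-1 / t))"
      by (simp add: powr_add[symmetric])
    also have "\<dots> < 2 powr 0"
      using R(2) by (intro powr_less_mono) (auto simp: e_def)
    also have "\<dots> = 1" by simp
    finally show False by simp
  qed
  show ?thesis
    unfolding optimal_exponent_def
  proof (rule Sup_least)
    fix z assume "z \<in> insert 0 {ereal s | s. s \<ge> 0 \<and>
     (\<exists>E D. is_codec S E \<and>
        (\<exists>C::real. \<forall>R::nat. R \<ge> 1 \<longrightarrow> ereal (real R powr s) * distortion S E D R \<le> ereal C))}"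
    then show "z \<le> ereal s0"
      using main assms(4) by auto
  qed
qed

end
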